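(* Let $u$ be a coherent utility on $L^0$ whose determining set $\mathcal{D}$ is $L^1$-closed and uniformly integrable, let $Y$ be a random variable or random vector, and let $X,W\in L^1_s(\mathcal{D})\cap L^1_s(\mathsf{E}(\mathcal{D}\mid Y))\cap L^1$. Then $$u^{fc}(X;Y;W)=\lim_{\varepsilon\downarrow0}\varepsilon^{-1}\big(u^f(W+\varepsilon X;Y)-u^f(W;Y)\big).$$
   Context: Let $(\Omega,\mathcal{F},\mathsf{P})$ be a probability space, $L^0$ the space of all real random variables, $L^1=L^1(\mathsf{P})$, and $\mathcal{P}$ the set of probability measures on $\mathcal{F}$ absolutely continuous with respect to $\mathsf{P}$; measures are identified with their densities. For $\mathsf{Q}\in\mathcal{P}$, $\mathsf{E}_\mathsf{Q}X:=\mathsf{E}_\mathsf{Q}X^+-\mathsf{E}_\mathsf{Q}X^-$ with the convention $\infty-\infty=-\infty$. A coherent utility on $L^0$ is a map $u:L^0\to[-\infty,\infty]$ of the form $u(X)=\inf_{\mathsf{Q}\in\mathcal{D}}\mathsf{E}_\mathsf{Q}X$ for a nonempty $\mathcal{D}\subseteq\mathcal{P}$; its determining set is the largest such set, $\{\mathsf{Q}\in\mathcal{P}:\mathsf{E}_\mathsf{Q}X\ge u(X)\ \forall X\in L^0\}$. For $\mathcal{C}\subseteq\mathcal{P}$, $L^1_s(\mathcal{C})=\{X\in L^0:\lim_{n\to\infty}\sup_{\mathsf{Q}\in\mathcal{C}}\mathsf{E}_\mathsf{Q}|X|I(|X|>n)=0\}$. For a random vector $Y$, $\mathsf{E}(\mathcal{D}\mid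 Y):=\{\mathsf{E}(Z\mid Y):Z\in\mathcal{D}\}$ and $u^f(X;Y):=\inf_{\mathsf{Q}\in\mathsf{E}(\mathcal{D}\mid Y)}\mathsf{E}_\mathsf{Q}X$. Extreme measures: $\mathcal{X}_{\mathsf{E}(\mathcal{D}\mid Y)}(W)=\{\mathsf{Q}\in\mathsf{E}(\mathcal{D}\mid Y):\mathsf{E}_\mathsf{Q}W=u^f(W;Y)\in(-\infty,\infty)\}$; factor utility contribution: $u^{fc}(X;Y;W)=\inf_{\mathsf{Q}\in\mathcal{X}_{\mathsf{E}(\mathcal{D}\mid Y)}(W)}\mathsf{E}_\mathsf{Q}X$. *)

theory Defs
  imports "HOL-Probability.Probability"
begin

text \<open>Probability measures absolutely continuous w.r.t. M, identified with their densities.\<close>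
definition dens :: "'a measure \<Rightarrow> ('a \<Rightarrow> real) set" where
  "dens M = {Z. Z \<in> borel_measurable M \<and> (AE x in M. 0 \<le> Z x) \<and> integrable M Z \<and> integral\<^sup>L M Z = 1}"

text \<open>E_Q X = E_Q X^+ - E_Q X^-, with the convention infinity - infinity = -infinity.\<close>
definition EQ :: "'a measure \<Rightarrow> ('a \<Rightarrow> real) \<Rightarrow> ('a \<Rightarrow> real) \<Rightarrow> ereal" where
  "EQ M Z X =
     (let p = (\<integral>\<^sup>+ x. ennreal (Z x * max (X x) 0) \<partial>M);
          n = (\<integral>\<^sup>+ x. ennreal (Z x * max (- X x) 0) \<partial>M)
      in if n = \<infinity> then - \<infinity> else enn2ereal p - enn2ereal n)"

definition coherent_utility :: "'a measure \<Rightarrow> (('a \<Rightarrow> real) \<Rightarrow> ereal) \<Rightarrow> bool" where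
  "coherent_utility M u \<longleftrightarrow>
     (\<exists>D0. D0 \<noteq> {} \<and> D0 \<subseteq> dens M \<and> (\<forall>X \<in> borel_measurable M. u X = (INF Q\<in>D0. EQ M Q X)))"

definition determining_set :: "'a measure \<Rightarrow> (('a \<Rightarrow> real) \<Rightarrow> ereal) \<Rightarrow> ('a \<Rightarrow> real) set" where
  "determining_set M u = {Q \<in> dens M. \<forall>X \<in> borel_measurable M. u X \<le> EQ M Q X}"

definition L1_closed :: "'a measure \<Rightarrow> ('a \<Rightarrow> real) set \<Rightarrow> bool" where
  "L1_closed M D \<longleftrightarrow>
     (\<forall>Zs Z. (\<forall>n. Zs n \<in> D) \<longrightarrow> integrable M Z \<longrightarrow>
        (\<lambda>n. \<integral>x. \<bar>Zs n x - Z x\<bar> \<partial>M) \<longlonglongrightarrow> 0 \<longrightarrow> Z \<in> D)"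

definition unif_integrable :: "'a measure \<Rightarrow> ('a \<Rightarrow> real) set \<Rightarrow> bool" where
  "unif_integrable M D \<longleftrightarrow>
     ((\<lambda>n::nat. SUP Z\<in>D. (\<integral>\<^sup>+ x. ennreal (\<bar>Z x\<bar> * indicator {x. \<bar>Z x\<bar> > real n} x) \<partial>M))
        \<longlonglongrightarrow> 0)"

definition L1s :: "'a measure \<Rightarrow> ('a \<Rightarrow> real) set \<Rightarrow> ('a \<Rightarrow> real) set" where
  "L1s M C = {X \<in> borel_measurable M.
     (\<lambda>n::nat. SUP Q\<in>C. EQ M Q (\<lambda>x. \<bar>X x\<bar> * indicator {x. \<bar>X x\<bar> > real n} x)) \<longlonglongrightarrow> 0}"

definition cond_set :: "'a measure \<Rightarrow> ('a \<Rightarrow> real) set \<Rightarrow> ('a \<Rightarrow> 'b::euclidean_space) \<Rightarrow> ('a \<Rightarrow> real) set" where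
  "cond_set M D Y = (\<lambda>Z. real_cond_exp M (vimage_algebra (space M) Y borel) Z) ` D"

definition uf :: "'a measure \<Rightarrow> ('a \<Rightarrow> real) set \<Rightarrow> ('a \<Rightarrow> real) \<Rightarrow> ('a \<Rightarrow> 'b::euclidean_space) \<Rightarrow> ereal" where
  "uf M D X Y = (INF Q\<in>cond_set M D Y. EQ M Q X)"

definition extreme_set :: "'a measure \<Rightarrow> ('a \<Rightarrow> real) set \<Rightarrow> ('a \<Rightarrow> 'b::euclidean_space) \<Rightarrow> ('a \<Rightarrow> real) \<Rightarrow> ('a \<Rightarrow> real) set" where
  "extreme_set M D Y W = {Q \<in> cond_set M D Y. EQ M Q W = uf M D W Y \<and> \<bar>uf M D W Y\<bar> \<noteq> \<infinity>}"

definition ufc :: "'a measure \<Rightarrow> ('a \<Rightarrow> real) set \<Rightarrow> ('a \<Rightarrow> real) \<Rightarrow> ('a \<Rightarrow> 'b::euclidean_space) \<Rightarrow> ('a \<Rightarrow> real) \<Rightarrow> ereal" where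
  "ufc M D X Y W = (INF Q\<in>extreme_set M D Y W. EQ M Q X)"

end

theory Submission
  imports Defs
begin

lemma L1_complete:
  fixes f :: "nat \<Rightarrow> 'a \<Rightarrow> real"
  assumes int: "\<And>n. integrable M (f n)"
    and cauchy: "\<And>e. e > 0 \<Longrightarrow> \<exists>N. \<forall>m\<ge>N. \<forall>n\<ge>N. (\<integral>x. \<bar>f m x - f n x\<bar> \<partial>M) < e"
  shows "\<exists>r G. strict_mono r \<and> integrable M G \<and> (\<lambda>k. \<integral>x. \<bar>f (r k) x - G x\<bar> \<partial>M) \<longlonglongrightarrow> 0"
proof -
  have [measurable]: "\<And>n. f n \<in> borel_measurable M" using int by auto
  have "\<forall>k. \<exists>N. \<forall>m\<ge>N. \<forall>n\<ge>N. (\<integral>x. \<bar>f m x - f n x\<bar> \<partial>M) < (1/2)^k"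
    using cauchy by simp
  then obtain N where N: "\<And>k m n. m \<ge> N k \<Longrightarrow> n \<ge> N k \<Longrightarrow> (\<integral>x. \<bar>f m x - f n x\<bar> \<partial>M) < (1/2)^k"
    by metis
  define r where "r k = k + (\<Sum>i\<le>k. N i)" for k
  have "strict_mono r" unfolding strict_mono_Suc_iff r_def by simp
  have rN: "N k \<le> r j" if "k \<le> j" for k j
  proof -
    have "N k \<le> (\<Sum>i\<le>j. N i)" using that by (intro member_le_sum) auto
    then show ?thesis unfolding r_def by simp
  qed
  define g where "g k = f (r k)" for k
  have [measurable]: "\<And>k. g k \<in> borel_measurable M" unfolding g_def by simp
  have gint: "\<And>k. integrable M (g k)" unfolding g_def using int by simp
  have bnd: "(\<integral>x. \<bar>g j x - g k x\<bar> \<partial>M) < (1/2)^k" if "k \<le> j" for j k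
    unfolding g_def using N rN that by simp
  have nnbnd: "(\<integral>\<^sup>+x. ennreal \<bar>g j x - g k x\<bar> \<partial>M) \<le> ennreal ((1/2)^k)" if "k \<le> j" for j k
  proof -
    have "(\<integral>\<^sup>+x. ennreal \<bar>g j x - g k x\<bar> \<partial>M) = ennreal (\<integral>x. \<bar>g j x - g k x\<bar> \<partial>M)"
      by (intro nn_integral_eq_integral) (auto intro!: integrable_abs integrable_diff gint)
    then show ?thesis using bnd[OF that] by (simp add: ennreal_leI)
  qed
  define S where "S x = (\<Sum>k. ennreal \<bar>g (Suc k) x - g k x\<bar>)" for x
  have "(\<integral>\<^sup>+x. S x \<partial>M) = (\<Sum>k. \<integral>\<^sup>+x. ennreal \<bar>g (Suc k) x - g k x\<bar> \<partial>M)"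
    unfolding S_def by (intro nn_integral_suminf) auto
  also have "\<dots> \<le> (\<Sum>k. ennreal ((1/2)^k))"
    by (intro suminf_le nnbnd) auto
  also have "\<dots> = ennreal (\<Sum>k. (1/2)^k)"
    by (intro suminf_ennreal2) auto
  also have "\<dots> < \<infinity>" by simp
  finally have "(\<integral>\<^sup>+x. S x \<partial>M) \<noteq> \<infinity>" by simp
  then have "AE x in M. S x \<noteq> \<infinity>"
    by (intro nn_integral_PInf_AE) (auto simp: S_def)
  then have conv: "AE x in M. convergent (\<lambda>k. g k x)"
  proof (rule AE_mp, intro AE_I2 impI)
    fix x assume "S x \<noteq> \<infinity>"
    then have "summable (\<lambda>k. \<bar>g (Suc k) x - g k x\<bar>)"
      unfolding S_def by (intro summable_suminf_not_top) auto
    then have "summable (\<lambda>k. g (Suc k) x - g k x)"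
      by (rule summable_rabs_cancel)
    then have "(\<lambda>n. \<Sum>k<n. g (Suc k) x - g k x) \<longlonglongrightarrow> (\<Sum>k. g (Suc k) x - g k x)"
      by (rule summable_LIMSEQ)
    then have "(\<lambda>n. g 0 x + (\<Sum>k<n. g (Suc k) x - g k x)) \<longlonglongrightarrow> g 0 x + (\<Sum>k. g (Suc k) x - g k x)"
      by (intro tendsto_add) auto
    moreover have "\<And>n. g 0 x + (\<Sum>k<n. g (Suc k) x - g k x) = g n x"
      by (induct_tac n) auto
    ultimately show "convergent (\<lambda>k. g k x)" unfolding convergent_def by auto
  qed
  define G where "G x = lim (\<lambda>k. g k x)" for x
  have [measurable]: "G \<in> borel_measurable M" unfolding G_def by measurable
  have lim: "AE x in M. (\<lambda>k. g k x) \<longlonglongrightarrow> G x"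
    using conv unfolding G_def by (auto simp: convergent_LIMSEQ_iff)
  have Gk: "(\<integral>\<^sup>+x. ennreal \<bar>G x - g k x\<bar> \<partial>M) \<le> ennreal ((1/2)^k)" for k
  proof -
    have "(\<integral>\<^sup>+x. ennreal \<bar>G x - g k x\<bar> \<partial>M) = (\<integral>\<^sup>+x. liminf (\<lambda>j. ennreal \<bar>g j x - g k x\<bar>) \<partial>M)"
    proof (intro nn_integral_cong_AE, use lim in \<open>rule AE_mp, intro AE_I2 impI\<close>)
      fix x assume "(\<lambda>j. g j x) \<longlonglongrightarrow> G x"
      then have "(\<lambda>j. ennreal \<bar>g j x - g k x\<bar>) \<longlonglongrightarrow> ennreal \<bar>G x - g k x\<bar>"
        by (intro tendsto_ennrealI tendsto_rabs tendsto_diff) auto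
      then show "ennreal \<bar>G x - g k x\<bar> = liminf (\<lambda>j. ennreal \<bar>g j x - g k x\<bar>)"
        by (intro lim_imp_Liminf[symmetric]) auto
    qed
    also have "\<dots> \<le> liminf (\<lambda>j. \<integral>\<^sup>+x. ennreal \<bar>g j x - g k x\<bar> \<partial>M)"
      by (intro nn_integral_liminf) auto
    also have "\<dots> \<le> ennreal ((1/2)^k)"
      by (intro Liminf_le) (auto simp: eventually_sequentially intro!: exI[of _ k] nnbnd)
    finally show ?thesis .
  qed
  have intGk: "integrable M (\<lambda>x. G x - g k x)" for k
    using Gk[of k] by (intro integrableI_bounded) (auto simp: le_less_trans)
  have intG: "integrable M G"
  proof -
    have "integrable M (\<lambda>x. (G x - g 0 x) + g 0 x)" using Bochner_Integration.integrable_add[OF intGk gint] .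
    then show ?thesis by simp
  qed
  have "(\<lambda>k. \<integral>x. \<bar>g k x - G x\<bar> \<partial>M) \<longlonglongrightarrow> 0"
  proof (rule tendsto_sandwich[of "\<lambda>_. 0" _ _ "\<lambda>k. (1/2)^k"])
    show "\<forall>\<^sub>F k in sequentially. 0 \<le> (\<integral>x. \<bar>g k x - G x\<bar> \<partial>M)" by auto
    show "\<forall>\<^sub>F k in sequentially. (\<integral>x. \<bar>g k x - G x\<bar> \<partial>M) \<le> (1/2)^k"
    proof (intro always_eventually allI)
      fix k
      have "ennreal (\<integral>x. \<bar>g k x - G x\<bar> \<partial>M) = (\<integral>\<^sup>+x. ennreal \<bar>G x - g k x\<bar> \<partial>M)"
        by (subst nn_integral_eq_integral) (auto intro: intGk simp: abs_minus_commute)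
      with Gk[of k] have "ennreal (\<integral>x. \<bar>g k x - G x\<bar> \<partial>M) \<le> ennreal ((1/2)^k)"
        by simp
      then show "(\<integral>x. \<bar>g k x - G x\<bar> \<partial>M) \<le> (1/2)^k"
        by (subst (asm) ennreal_le_iff) auto
    qed
    show "(\<lambda>k. (1/2::real)^k) \<longlonglongrightarrow> 0" by (intro LIMSEQ_power_zero) auto
  qed auto
  then show ?thesis using \<open>strict_mono r\<close> intG unfolding g_def by blast
qed

definition psi :: "real \<Rightarrow> real" where "psi a = exp (- max a 0 / 2)"

lemma psi_bounds: "0 < psi a" "psi a \<le> 1"
  unfolding psi_def by auto

lemma psi_mid: "a \<ge> 0 \<Longrightarrow> b \<ge> 0 \<Longrightarrow> (psi ((a + b) / 2))^2 = psi a * psi b"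
  unfolding psi_def by (simp add: power2_eq_square flip: exp_add) (simp add: field_simps)

lemma psi_lip:
  assumes "0 \<le> a" "a \<le> b" "b \<le> k"
  shows "b - a \<le> 2 * exp (k/2) * (psi a - psi b)"
proof -
  have "1 + (b - a)/2 \<le> exp ((b - a)/2)" by (rule exp_ge_add_one_self)
  then have "exp (-b/2) * (1 + (b-a)/2) \<le> exp (-b/2) * exp ((b-a)/2)" by simp
  also have "exp (-b/2) * exp ((b-a)/2) = exp (-a/2)" by (simp flip: exp_add) (simp add: field_simps)
  finally have "exp (-b/2) * ((b-a)/2) \<le> exp (-a/2) - exp (-b/2)" by (simp add: algebra_simps)
  moreover have "exp (-k/2) \<le> exp (-b/2)" using assms by simp
  ultimately have "exp (-k/2) * ((b-a)/2) \<le> exp (-a/2) - exp (-b/2)"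
    using assms by (meson order.trans mult_right_mono divide_nonneg_pos diff_ge_0_iff_ge zero_less_numeral)
  then have "exp (k/2) * (exp (-k/2) * ((b-a)/2)) \<le> exp (k/2) * (exp (-a/2) - exp (-b/2))"
    by simp
  moreover have "exp (k/2) * exp (-k/2) = 1" by (simp flip: exp_add)
  ultimately have "(b-a)/2 \<le> exp (k/2) * (exp (-a/2) - exp (-b/2))"
    by (metis mult.assoc mult_1)
  moreover have "psi a = exp (-a/2)" "psi b = exp (-b/2)" unfolding psi_def using assms by auto
  ultimately show ?thesis by simp
qed

lemma small_sq: "(\<delta>::real) > 0 \<Longrightarrow> \<bar>t\<bar> \<le> \<delta> + t^2 / \<delta>"
proof -
  assume d: "\<delta> > 0"
  have "\<bar>t\<bar> * \<delta> \<le> \<delta> * \<delta> + t^2"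
  proof (cases "\<bar>t\<bar> \<le> \<delta>")
    case True then show ?thesis using d by (simp add: mult_right_mono add_increasing2)
  next
    case False then have "\<bar>t\<bar> * \<delta> \<le> \<bar>t\<bar> * \<bar>t\<bar>" using d by (intro mult_left_mono) auto
    then show ?thesis by (simp add: power2_eq_square add_increasing)
  qed
  then show ?thesis using d by (simp add: field_simps)
qed

lemma pw_bound:
  assumes "0 \<le> a" "0 \<le> b" "0 \<le> k" "0 < \<delta>"
  shows "\<bar>a - b\<bar> \<le> 2 * exp (k/2) * \<delta> + 2 * exp (k/2) / \<delta> * (psi a - psi b)^2
           + \<bar>a\<bar> * indicator {x. \<bar>x\<bar> > k} a + \<bar>b\<bar> * indicator {x. \<bar>x\<bar> > k} b"
proof -
  have t: "0 \<le> 2 * exp (k/2) * \<delta> + 2 * exp (k/2) / \<delta> * (psi a - psi b)^2" using assms by auto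
  show ?thesis
  proof (cases "a \<le> k \<and> b \<le> k")
    case True
    have "\<bar>a - b\<bar> \<le> 2 * exp (k/2) * \<bar>psi a - psi b\<bar>"
    proof (cases "a \<le> b")
      case True
      have "2*exp(k/2)*(psi a - psi b) \<le> 2*exp(k/2)*\<bar>psi a - psi b\<bar>" by (intro mult_left_mono) auto
      moreover have "b - a \<le> 2 * exp (k/2) * (psi a - psi b)" using assms \<open>a \<le> k \<and> b \<le> k\<close> True by (intro psi_lip) auto
      ultimately show ?thesis using True by linarith
    next
      case False
      have "2*exp(k/2)*(psi b - psi a) \<le> 2*exp(k/2)*\<bar>psi a - psi b\<bar>" by (intro mult_left_mono) auto
      moreover have "a - b \<le> 2 * exp (k/2) * (psi b - psi a)" using assms \<open>a \<le> k \<and> b \<le> k\<close> False by (intro psi_lip) auto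
      ultimately show ?thesis using False by linarith
    qed
    also have "\<dots> \<le> 2 * exp (k/2) * (\<delta> + (psi a - psi b)^2 / \<delta>)"
      using small_sq[OF assms(4), of "psi a - psi b"] by (intro mult_left_mono) auto
    also have "\<dots> = 2 * exp (k/2) * \<delta> + 2 * exp (k/2) / \<delta> * (psi a - psi b)^2"
      by (simp add: algebra_simps)
    finally show ?thesis using assms True t by (simp add: indicator_def)
  next
    case False
    then have "\<bar>a - b\<bar> \<le> \<bar>a\<bar> * indicator {x. \<bar>x\<bar> > k} a + \<bar>b\<bar> * indicator {x. \<bar>x\<bar> > k} b"
      using assms by (auto simp: indicator_def)
    with t show ?thesis by linarith
  qed
qed

lemma dens_facts:
  assumes "Z \<in> dens M"
  shows "Z \<in> borel_measurable M" "AE x in M. 0 \<le> Z x" "integrable M Z" "integral\<^sup>L M Z = 1"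
  using assms unfolding dens_def by auto

lemma tail_int:
  assumes Zd: "Z \<in> dens M"
  shows "integrable M (\<lambda>x. \<bar>Z x\<bar> * indicator {x. \<bar>Z x\<bar> > k} x)"
proof -
  have [measurable]: "Z \<in> borel_measurable M" using dens_facts[OF Zd] by auto
  show ?thesis
    by (rule Bochner_Integration.integrable_bound[OF integrable_abs[OF dens_facts(3)[OF Zd]]]) (auto simp: indicator_def)
qed

lemma UI_tail:
  assumes "D \<subseteq> dens M" "unif_integrable M D" "\<eta> > 0"
  shows "\<exists>n::nat. \<forall>Z\<in>D. (\<integral>x. \<bar>Z x\<bar> * indicator {x. \<bar>Z x\<bar> > real n} x \<partial>M) \<le> \<eta>"
proof -
  from assms(2) have "(\<lambda>n::nat. SUP Z\<in>D. (\<integral>\<^sup>+ x. ennreal (\<bar>Z x\<bar> * indicator {x. \<bar>Z x\<bar> > real n} x) \<partial>M)) \<longlonglongrightarrow> 0"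
    unfolding unif_integrable_def .
  from order_tendstoD(2)[OF this, of "ennreal \<eta>"] assms(3)
  obtain n where n: "(SUP Z\<in>D. (\<integral>\<^sup>+ x. ennreal (\<bar>Z x\<bar> * indicator {x. \<bar>Z x\<bar> > real n} x) \<partial>M)) < ennreal \<eta>"
    by (auto simp: eventually_sequentially)
  show ?thesis
  proof (intro exI ballI)
    fix Z assume Z: "Z \<in> D"
    then have Zd: "Z \<in> dens M" using assms by auto
    have [measurable]: "Z \<in> borel_measurable M" using dens_facts[OF Zd] by auto
    have int: "integrable M (\<lambda>x. \<bar>Z x\<bar> * indicator {x. \<bar>Z x\<bar> > real n} x)"
      by (rule Bochner_Integration.integrable_bound[OF integrable_abs[OF dens_facts(3)[OF Zd]]]) (auto simp: indicator_def)
    have "ennreal (\<integral>x. \<bar>Z x\<bar> * indicator {x. \<bar>Z x\<bar> > real n} x \<partial>M)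
        = (\<integral>\<^sup>+ x. ennreal (\<bar>Z x\<bar> * indicator {x. \<bar>Z x\<bar> > real n} x) \<partial>M)"
      by (rule nn_integral_eq_integral[symmetric, OF int]) auto
    also have "\<dots> \<le> (SUP Z\<in>D. (\<integral>\<^sup>+ x. ennreal (\<bar>Z x\<bar> * indicator {x. \<bar>Z x\<bar> > real n} x) \<partial>M))"
      using Z by (rule SUP_upper)
    also note n
    finally show "(\<integral>x. \<bar>Z x\<bar> * indicator {x. \<bar>Z x\<bar> > real n} x \<partial>M) \<le> \<eta>"
      using assms(3) by (simp add: ennreal_less_iff)
  qed
qed

lemma compact_nested:
  fixes D :: "('a \<Rightarrow> real) set" and K :: "nat \<Rightarrow> ('a \<Rightarrow> real) set"
  assumes P: "prob_space M" and Dd: "D \<subseteq> dens M" and Dc: "L1_closed M D" and UI: "unif_integrable M D"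
    and KD: "\<And>j. K j \<subseteq> D" and Kdec: "\<And>j. K (Suc j) \<subseteq> K j" and Kne: "\<And>j. K j \<noteq> {}"
    and Kmid: "\<And>j a b. a \<in> K j \<Longrightarrow> b \<in> K j \<Longrightarrow> (\<lambda>x. (a x + b x) / 2) \<in> K j"
    and Kcl: "\<And>j Zs Z. (\<And>k. Zs k \<in> K j) \<Longrightarrow> Z \<in> D \<Longrightarrow> (\<lambda>k. \<integral>x. \<bar>Zs k x - Z x\<bar> \<partial>M) \<longlonglongrightarrow> 0 \<Longrightarrow> Z \<in> K j"
  shows "\<exists>Z. \<forall>j. Z \<in> K j"
proof -
  interpret prob_space M by (rule P)
  have Kmono: "K i \<subseteq> K j" if "j \<le> i" for i j
    using that Kdec by (metis decseq_Suc_iff decseqD)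
  have inD: "Z \<in> dens M" if "Z \<in> K j" for Z j using that KD Dd by blast
  define \<Phi> where "\<Phi> Z = (\<integral>x. (psi (Z x))^2 \<partial>M)" for Z
  have psim[measurable]: "psi \<in> borel_measurable borel" unfolding psi_def by measurable
  have intb: "integrable M g" if "g \<in> borel_measurable M" "\<And>x. \<bar>g x\<bar> \<le> 4" for g :: "'a \<Rightarrow> real"
    by (rule integrable_const_bound[where B=4]) (use that in auto)
  have psi01: "\<bar>psi a\<bar> \<le> 1" for a using psi_bounds[of a] by auto
  have psiab: "\<bar>psi a * psi b\<bar> \<le> 1" for a b using psi01[of a] psi01[of b]
    by (simp add: abs_mult mult_le_one)
  have int1: "integrable M (\<lambda>x. (psi (Z x))^2)" if "Z \<in> borel_measurable M" for Z
  proof (intro intb)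
    show "(\<lambda>x. (psi (Z x))^2) \<in> borel_measurable M" using that by measurable
    fix x show "\<bar>(psi (Z x))^2\<bar> \<le> 4" using psiab[of "Z x" "Z x"] by (simp add: power2_eq_square)
  qed
  have int2: "integrable M (\<lambda>x. psi (Z x) * psi (Z' x))" if "Z \<in> borel_measurable M" "Z' \<in> borel_measurable M" for Z Z'
  proof (intro intb)
    show "(\<lambda>x. psi (Z x) * psi (Z' x)) \<in> borel_measurable M" using that by measurable
    fix x show "\<bar>psi (Z x) * psi (Z' x)\<bar> \<le> 4" using psiab[of "Z x" "Z' x"] by simp
  qed
  have int3: "integrable M (\<lambda>x. (psi (Z x) - psi (Z' x))^2)" if "Z \<in> borel_measurable M" "Z' \<in> borel_measurable M" for Z Z'
  proof (intro intb)
    show "(\<lambda>x. (psi (Z x) - psi (Z' x))^2) \<in> borel_measurable M" using that by measurable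
    fix x
    have "\<bar>psi (Z x) - psi (Z' x)\<bar> \<le> 2" using psi01[of "Z x"] psi01[of "Z' x"] by linarith
    then have "\<bar>psi (Z x) - psi (Z' x)\<bar>^2 \<le> 2^2" by (intro power_mono) auto
    then show "\<bar>(psi (Z x) - psi (Z' x))^2\<bar> \<le> 4" by simp
  qed
  have Phi0: "0 \<le> \<Phi> Z" for Z unfolding \<Phi>_def by (intro integral_nonneg_AE) auto
  have Phi1: "\<Phi> Z \<le> 1" if "Z \<in> borel_measurable M" for Z
  proof -
    have "\<Phi> Z \<le> (\<integral>x. 1 \<partial>M)" unfolding \<Phi>_def
      using psiab int1[OF that] by (intro integral_mono) (auto simp: power2_eq_square abs_le_iff)
    then show ?thesis by (simp add: prob_space)
  qed
  define A where "A j = Inf (\<Phi> ` K j)" for j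
  have bddb: "bdd_below (\<Phi> ` K j)" for j using Phi0 by (intro bdd_belowI[where m=0]) auto
  have A_le: "A j \<le> \<Phi> Z" if "Z \<in> K j" for Z j unfolding A_def using bddb that by (intro cInf_lower) auto
  have A_mono: "A j \<le> A i" if "j \<le> i" for i j
    unfolding A_def using Kne[of i] bddb[of j] Kmono[OF that] by (intro cInf_superset_mono) auto
  have A_le1: "A j \<le> 1" for j
  proof -
    obtain Z where "Z \<in> K j" using Kne by blast
    then show ?thesis using A_le[of Z j] Phi1[of Z] dens_facts(1)[OF inD] by force
  qed
  have "\<exists>Z. Z \<in> K j \<and> \<Phi> Z < A j + 1/(real j+1)" for j
  proof -
    have "Inf (\<Phi> ` K j) < A j + 1/(real j+1)" unfolding A_def by simp
    from cInf_lessD[OF _ this] Kne[of j] show ?thesis by auto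
  qed
  then obtain Zs where Zs: "\<And>j. Zs j \<in> K j" "\<And>j. \<Phi> (Zs j) < A j + 1/(real j+1)" by metis
  have Zsd: "Zs j \<in> dens M" for j using inD Zs by blast
  have Zsm[measurable]: "Zs j \<in> borel_measurable M" for j using dens_facts(1)[OF Zsd] .
  define As where "As = Sup (range A)"
  have bdda: "bdd_above (range A)" using A_le1 by (intro bdd_aboveI[where M=1]) auto
  have A_As: "A j \<le> As" for j unfolding As_def using bdda by (intro cSup_upper) auto
  have key: "(\<integral>x. (psi (Zs i x) - psi (Zs j x))^2 \<partial>M) \<le> (As - A j) + 2/(real j+1)" if "j \<le> i" for i j
  proof -
    define a where "a = Zs i"
    define b where "b = Zs j"
    have aK: "a \<in> K j" unfolding a_def using Zs(1)[of i] Kmono[OF that] by auto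
    have bK: "b \<in> K j" unfolding b_def using Zs(1) by auto
    have [measurable]: "a \<in> borel_measurable M" "b \<in> borel_measurable M" unfolding a_def b_def by auto
    have midK: "(\<lambda>x. (a x + b x)/2) \<in> K j" using Kmid aK bK by auto
    have midm[measurable]: "(\<lambda>x. (a x + b x)/2) \<in> borel_measurable M" by measurable
    have ae: "AE x in M. 0 \<le> a x \<and> 0 \<le> b x"
      using dens_facts(2)[OF Zsd[of i]] dens_facts(2)[OF Zsd[of j]] unfolding a_def b_def by auto
    have "(\<integral>x. (psi (a x) - psi (b x))^2 \<partial>M)
       = (\<integral>x. ((psi (a x))^2 + (psi (b x))^2) - 2 * (psi ((a x + b x)/2))^2 \<partial>M)"
    proof (rule integral_cong_AE)
      show "AE x in M. (psi (a x) - psi (b x))^2 = ((psi (a x))^2 + (psi (b x))^2) - 2 * (psi ((a x + b x)/2))^2"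
        using ae
      proof eventually_elim
        case (elim x)
        then have "(psi ((a x + b x)/2))^2 = psi (a x) * psi (b x)" by (intro psi_mid) auto
        then show ?case by (simp add: power2_eq_square algebra_simps)
      qed
    qed measurable
    also have "\<dots> = \<Phi> a + \<Phi> b - 2 * \<Phi> (\<lambda>x. (a x + b x)/2)"
    proof -
      have i1: "integrable M (\<lambda>x. (psi (a x))^2)" "integrable M (\<lambda>x. (psi (b x))^2)"
        "integrable M (\<lambda>x. (psi ((a x + b x)/2))^2)" by (intro int1; measurable)+
      have "(\<integral>x. ((psi (a x))^2 + (psi (b x))^2) - 2 * (psi ((a x + b x)/2))^2 \<partial>M)
         = (\<integral>x. ((psi (a x))^2 + (psi (b x))^2) \<partial>M) - (\<integral>x. 2 * (psi ((a x + b x)/2))^2 \<partial>M)"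
        using i1 by (intro Bochner_Integration.integral_diff Bochner_Integration.integrable_add integrable_mult_right) auto
      also have "(\<integral>x. ((psi (a x))^2 + (psi (b x))^2) \<partial>M) = \<Phi> a + \<Phi> b"
        unfolding \<Phi>_def using i1 by (intro Bochner_Integration.integral_add) auto
      also have "(\<integral>x. 2 * (psi ((a x + b x)/2))^2 \<partial>M) = 2 * \<Phi> (\<lambda>x. (a x + b x)/2)"
        unfolding \<Phi>_def by simp
      finally show ?thesis .
    qed
    also have "\<dots> \<le> (A i + 1/(real i+1)) + (A j + 1/(real j+1)) - 2 * A j"
      using Zs(2)[of i] Zs(2)[of j] A_le[OF midK] unfolding a_def b_def by linarith
    also have "\<dots> \<le> (As - A j) + 2/(real j+1)"
    proof -
      have "1/(real i+1) \<le> 1/(real j+1)" using that by (intro divide_left_mono) auto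
      moreover have "2/(real j+1) = 2*(1/(real j+1))" by simp
      ultimately show ?thesis using A_As[of i] by linarith
    qed
    finally show ?thesis unfolding a_def b_def .
  qed
  have cauchy_ord: "\<exists>N. \<forall>i j. N \<le> j \<longrightarrow> j \<le> i \<longrightarrow> (\<integral>x. \<bar>Zs i x - Zs j x\<bar> \<partial>M) < e" if e: "e > 0" for e
  proof -
    obtain n0 :: nat where tail: "\<And>Z. Z \<in> D \<Longrightarrow> (\<integral>x. \<bar>Z x\<bar> * indicator {x. \<bar>Z x\<bar> > real n0} x \<partial>M) \<le> e/4"
      using UI_tail[OF Dd UI, of "e/4"] e by auto
    define k where "k = real n0"
    define c where "c = 2 * exp (k/2)"
    have c0: "c > 0" unfolding c_def by simp
    define \<delta> where "\<delta> = e / (4 * c)"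
    have d0: "\<delta> > 0" unfolding \<delta>_def using c0 e by simp
    define C2 where "C2 = c / \<delta>"
    have C20: "C2 > 0" unfolding C2_def using c0 d0 by simp
    define \<theta> where "\<theta> = e / (4 * C2)"
    have th0: "\<theta> > 0" unfolding \<theta>_def using C20 e by simp
    have "As - \<theta>/2 < Sup (range A)" unfolding As_def using th0 by simp
    then obtain j0 where j0: "As - \<theta>/2 < A j0"
      using less_cSup_iff[of "range A" "As - \<theta>/2"] bdda by auto
    obtain N1 :: nat where N1: "4/\<theta> < real N1" using reals_Archimedean2 by blast
    have N1': "2/(real j+1) < \<theta>/2" if "N1 \<le> j" for j
    proof -
      have "4/\<theta> < real j + 1" using N1 that by linarith
      then have "4 < \<theta> * (real j + 1)" using th0 by (simp add: field_simps)
      then show ?thesis using th0 by (simp add: field_simps)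
    qed
    show ?thesis
    proof (intro exI[of _ "max j0 N1"] allI impI)
      fix i j assume ij: "max j0 N1 \<le> j" "j \<le> i"
      have aeZ: "AE x in M. 0 \<le> Zs i x \<and> 0 \<le> Zs j x"
        using dens_facts(2)[OF Zsd[of i]] dens_facts(2)[OF Zsd[of j]] by auto
      have ZiD: "Zs i \<in> D" "Zs j \<in> D" using Zs(1) KD by blast+
      have it: "integrable M (\<lambda>x. \<bar>Zs i x\<bar> * indicator {x. \<bar>x\<bar> > k} (Zs i x))"
               "integrable M (\<lambda>x. \<bar>Zs j x\<bar> * indicator {x. \<bar>x\<bar> > k} (Zs j x))"
        using tail_int[OF Zsd[of i], of k] tail_int[OF Zsd[of j], of k] by (simp_all add: indicator_def)
      have "(\<integral>x. \<bar>Zs i x - Zs j x\<bar> \<partial>M) \<le> (\<integral>x. c * \<delta> + C2 * (psi (Zs i x) - psi (Zs j x))^2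
           + \<bar>Zs i x\<bar> * indicator {x. \<bar>x\<bar> > k} (Zs i x) + \<bar>Zs j x\<bar> * indicator {x. \<bar>x\<bar> > k} (Zs j x) \<partial>M)"
      proof (rule integral_mono_AE)
        show "integrable M (\<lambda>x. \<bar>Zs i x - Zs j x\<bar>)"
          using dens_facts(3)[OF Zsd[of i]] dens_facts(3)[OF Zsd[of j]] by auto
        show "integrable M (\<lambda>x. c * \<delta> + C2 * (psi (Zs i x) - psi (Zs j x))^2
           + \<bar>Zs i x\<bar> * indicator {x. \<bar>x\<bar> > k} (Zs i x) + \<bar>Zs j x\<bar> * indicator {x. \<bar>x\<bar> > k} (Zs j x))"
          using it int3[OF Zsm[of i] Zsm[of j]]
          by (intro Bochner_Integration.integrable_add integrable_mult_right) auto
        show "AE x in M. \<bar>Zs i x - Zs j x\<bar> \<le> c * \<delta> + C2 * (psi (Zs i x) - psi (Zs j x))^2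
           + \<bar>Zs i x\<bar> * indicator {x. \<bar>x\<bar> > k} (Zs i x) + \<bar>Zs j x\<bar> * indicator {x. \<bar>x\<bar> > k} (Zs j x)"
          using aeZ
        proof eventually_elim
          case (elim x)
          then show ?case using pw_bound[of "Zs i x" "Zs j x" k \<delta>] d0 unfolding c_def C2_def k_def
            by (simp add: mult.assoc)
        qed
      qed
      also have "\<dots> = c * \<delta> + C2 * (\<integral>x. (psi (Zs i x) - psi (Zs j x))^2 \<partial>M)
           + (\<integral>x. \<bar>Zs i x\<bar> * indicator {x. \<bar>x\<bar> > k} (Zs i x) \<partial>M) + (\<integral>x. \<bar>Zs j x\<bar> * indicator {x. \<bar>x\<bar> > k} (Zs j x) \<partial>M)"
        using it int3[OF Zsm[of i] Zsm[of j]]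
        by (simp add: Bochner_Integration.integral_add Bochner_Integration.integrable_add prob_space)
      also have "\<dots> < e"
      proof -
        have t1: "(\<integral>x. \<bar>Zs i x\<bar> * indicator {x. \<bar>x\<bar> > k} (Zs i x) \<partial>M) \<le> e/4"
          using tail[OF ZiD(1)] unfolding k_def by (simp add: indicator_def)
        have t2: "(\<integral>x. \<bar>Zs j x\<bar> * indicator {x. \<bar>x\<bar> > k} (Zs j x) \<partial>M) \<le> e/4"
          using tail[OF ZiD(2)] unfolding k_def by (simp add: indicator_def)
        have "A j0 \<le> A j" using ij by (intro A_mono) auto
        then have "(As - A j) + 2/(real j+1) < \<theta>" using j0 N1'[of j] ij by auto
        then have "C2 * (\<integral>x. (psi (Zs i x) - psi (Zs j x))^2 \<partial>M) < C2 * \<theta>"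
          using key[OF ij(2)] C20 by (intro mult_strict_left_mono) auto
        also have "C2 * \<theta> = e/4" unfolding \<theta>_def using C20 by simp
        finally have "C2 * (\<integral>x. (psi (Zs i x) - psi (Zs j x))^2 \<partial>M) < e/4" .
        moreover have "c * \<delta> = e/4" unfolding \<delta>_def using c0 by simp
        ultimately show ?thesis using t1 t2 by linarith
      qed
      finally show "(\<integral>x. \<bar>Zs i x - Zs j x\<bar> \<partial>M) < e" .
    qed
  qed
  have cauchy: "\<exists>N. \<forall>m\<ge>N. \<forall>n\<ge>N. (\<integral>x. \<bar>Zs m x - Zs n x\<bar> \<partial>M) < e" if e: "e > 0" for e
  proof -
    obtain N where N: "\<And>i j. N \<le> j \<Longrightarrow> j \<le> i \<Longrightarrow> (\<integral>x. \<bar>Zs i x - Zs j x\<bar> \<partial>M) < e"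
      using cauchy_ord[OF e] by blast
    show ?thesis
    proof (intro exI[of _ N] allI impI)
      fix m n assume "N \<le> m" "N \<le> n"
      show "(\<integral>x. \<bar>Zs m x - Zs n x\<bar> \<partial>M) < e"
      proof (cases "n \<le> m")
        case True then show ?thesis using N \<open>N \<le> n\<close> by auto
      next
        case False
        then have "(\<integral>x. \<bar>Zs n x - Zs m x\<bar> \<partial>M) < e" using N \<open>N \<le> m\<close> by auto
        then show ?thesis by (simp add: abs_minus_commute)
      qed
    qed
  qed
  obtain r G where r: "strict_mono r" and G: "integrable M G"
    and conv: "(\<lambda>k. \<integral>x. \<bar>Zs (r k) x - G x\<bar> \<partial>M) \<longlonglongrightarrow> 0"
    using L1_complete[of M Zs] cauchy dens_facts(3)[OF Zsd] by blast
  have "\<And>n. Zs (r n) \<in> D" using Zs(1) KD by blast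
  from Dc[unfolded L1_closed_def, rule_format, OF this G conv] have GD: "G \<in> D" .
  have "G \<in> K j" for j
  proof (rule Kcl[OF _ GD])
    fix k
    have "j \<le> r (k + j)" using seq_suble[OF r, of "k+j"] by linarith
    then show "Zs (r (k + j)) \<in> K j" using Zs(1) Kmono by blast
    show "(\<lambda>k. \<integral>x. \<bar>Zs (r (k + j)) x - G x\<bar> \<partial>M) \<longlonglongrightarrow> 0"
      using LIMSEQ_ignore_initial_segment[OF conv, of j] by simp
  qed
  then show ?thesis by blast
qed

lemma EQ_nonneg:
  assumes "\<And>x. 0 \<le> f x"
  shows "EQ M Q f = enn2ereal (\<integral>\<^sup>+x. ennreal (Q x * f x) \<partial>M)"
proof -
  have "\<And>x. max (- f x) 0 = 0" "\<And>x. max (f x) 0 = f x" using assms by (auto simp: max_def intro: order.antisym)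
  moreover have "enn2ereal 0 = 0" using enn2ereal_ennreal[of 0] by simp
  ultimately show ?thesis unfolding EQ_def Let_def by simp
qed

lemma EQ_int:
  assumes [measurable]: "Q \<in> borel_measurable M" "V \<in> borel_measurable M"
    and pos: "AE x in M. 0 \<le> Q x" and int: "integrable M (\<lambda>x. Q x * V x)"
  shows "EQ M Q V = ereal (\<integral>x. Q x * V x \<partial>M)"
proof -
  have ip: "integrable M (\<lambda>x. Q x * max (V x) 0)"
    by (rule Bochner_Integration.integrable_bound[OF int]) (auto simp: abs_mult intro!: mult_left_mono)
  have in_: "integrable M (\<lambda>x. Q x * max (- V x) 0)"
    by (rule Bochner_Integration.integrable_bound[OF int]) (auto simp: abs_mult intro!: mult_left_mono)
  have p: "(\<integral>\<^sup>+x. ennreal (Q x * max (V x) 0) \<partial>M) = ennreal (\<integral>x. Q x * max (V x) 0 \<partial>M)"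
    using pos by (intro nn_integral_eq_integral ip) auto
  have n: "(\<integral>\<^sup>+x. ennreal (Q x * max (- V x) 0) \<partial>M) = ennreal (\<integral>x. Q x * max (- V x) 0 \<partial>M)"
    using pos by (intro nn_integral_eq_integral in_) auto
  have p0: "0 \<le> (\<integral>x. Q x * max (V x) 0 \<partial>M)" using pos by (intro integral_nonneg_AE) auto
  have n0: "0 \<le> (\<integral>x. Q x * max (- V x) 0 \<partial>M)" using pos by (intro integral_nonneg_AE) auto
  have "(\<integral>x. Q x * max (V x) 0 \<partial>M) - (\<integral>x. Q x * max (- V x) 0 \<partial>M)
      = (\<integral>x. Q x * max (V x) 0 - Q x * max (- V x) 0 \<partial>M)"
    by (rule Bochner_Integration.integral_diff[symmetric, OF ip in_])
  also have "\<dots> = (\<integral>x. Q x * V x \<partial>M)"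
    by (intro Bochner_Integration.integral_cong refl) (auto simp: max_def algebra_simps)
  finally have eq: "(\<integral>x. Q x * max (V x) 0 \<partial>M) - (\<integral>x. Q x * max (- V x) 0 \<partial>M) = (\<integral>x. Q x * V x \<partial>M)" .
  show ?thesis unfolding EQ_def Let_def p n using p0 n0 eq by (simp add: enn2ereal_ennreal)
qed

lemma L1s_tail:
  assumes V: "V \<in> L1s M C" and eta: "\<eta> > 0"
    and Cprop: "\<And>Q. Q \<in> C \<Longrightarrow> Q \<in> borel_measurable M \<and> (AE x in M. 0 \<le> Q x)"
  shows "\<exists>n::nat. \<forall>Q\<in>C. integrable M (\<lambda>x. Q x * (\<bar>V x\<bar> * indicator {x. \<bar>V x\<bar> > real n} x))
           \<and> (\<integral>x. Q x * (\<bar>V x\<bar> * indicator {x. \<bar>V x\<bar> > real n} x) \<partial>M) \<le> \<eta>"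
proof -
  have [measurable]: "V \<in> borel_measurable M" using V unfolding L1s_def by auto
  have "(\<lambda>n::nat. SUP Q\<in>C. EQ M Q (\<lambda>x. \<bar>V x\<bar> * indicator {x. \<bar>V x\<bar> > real n} x)) \<longlonglongrightarrow> 0"
    using V unfolding L1s_def by auto
  from order_tendstoD(2)[OF this, of "ereal \<eta>"] eta
  obtain n where n: "(SUP Q\<in>C. EQ M Q (\<lambda>x. \<bar>V x\<bar> * indicator {x. \<bar>V x\<bar> > real n} x)) < ereal \<eta>"
    by (auto simp: eventually_sequentially)
  show ?thesis
  proof (intro exI[of _ n] ballI conjI)
    fix Q assume Q: "Q \<in> C"
    have [measurable]: "Q \<in> borel_measurable M" and pos: "AE x in M. 0 \<le> Q x" using Cprop[OF Q] by auto
    define f where "f x = \<bar>V x\<bar> * indicator {x. \<bar>V x\<bar> > real n} x" for x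
    have f0: "0 \<le> f x" for x unfolding f_def by auto
    have [measurable]: "f \<in> borel_measurable M" unfolding f_def by measurable
    have "EQ M Q f \<le> (SUP Q\<in>C. EQ M Q (\<lambda>x. \<bar>V x\<bar> * indicator {x. \<bar>V x\<bar> > real n} x))"
      unfolding f_def using Q by (rule SUP_upper)
    with n have lt: "enn2ereal (\<integral>\<^sup>+x. ennreal (Q x * f x) \<partial>M) < ereal \<eta>"
      using EQ_nonneg[of f M Q, OF f0] by simp
    have eqn: "(\<integral>\<^sup>+x. ennreal (norm (Q x * f x)) \<partial>M) = (\<integral>\<^sup>+x. ennreal (Q x * f x) \<partial>M)"
      using pos by (intro nn_integral_cong_AE) (auto simp: f0 abs_mult)
    have fin: "(\<integral>\<^sup>+x. ennreal (Q x * f x) \<partial>M) < \<infinity>"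
      using lt by (cases "(\<integral>\<^sup>+x. ennreal (Q x * f x) \<partial>M)" rule: ennreal_cases) auto
    have int: "integrable M (\<lambda>x. Q x * f x)"
      using fin eqn by (intro integrableI_bounded) auto
    have "ennreal (\<integral>x. Q x * f x \<partial>M) = (\<integral>\<^sup>+x. ennreal (Q x * f x) \<partial>M)"
      using pos f0 by (intro nn_integral_eq_integral[symmetric] int) auto
    moreover have "0 \<le> (\<integral>x. Q x * f x \<partial>M)" using pos f0 by (intro integral_nonneg_AE) auto
    ultimately have "ereal (\<integral>x. Q x * f x \<partial>M) < ereal \<eta>" using lt
      by (metis enn2ereal_ennreal)
    then show "(\<integral>x. Q x * f x \<partial>M) \<le> \<eta>" by simp
    show "integrable M (\<lambda>x. Q x * (\<bar>V x\<bar> * indicator {x. \<bar>V x\<bar> > real n} x))" using int unfolding f_def .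
  qed
qed

lemma L1s_bound:
  assumes V: "V \<in> L1s M C"
    and Cprop: "\<And>Q. Q \<in> C \<Longrightarrow> Q \<in> borel_measurable M \<and> (AE x in M. 0 \<le> Q x) \<and> integrable M Q \<and> integral\<^sup>L M Q = 1"
  shows "\<exists>B. \<forall>Q\<in>C. integrable M (\<lambda>x. Q x * V x) \<and> \<bar>\<integral>x. Q x * V x \<partial>M\<bar> \<le> B"
proof -
  have [measurable]: "V \<in> borel_measurable M" using V unfolding L1s_def by auto
  obtain n :: nat where n: "\<And>Q. Q \<in> C \<Longrightarrow> integrable M (\<lambda>x. Q x * (\<bar>V x\<bar> * indicator {x. \<bar>V x\<bar> > real n} x))
           \<and> (\<integral>x. Q x * (\<bar>V x\<bar> * indicator {x. \<bar>V x\<bar> > real n} x) \<partial>M) \<le> 1"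
    using L1s_tail[OF V, of 1] Cprop by force
  show ?thesis
  proof (intro exI[of _ "real n + 1"] ballI conjI)
    fix Q assume Q: "Q \<in> C"
    have [measurable]: "Q \<in> borel_measurable M" and pos: "AE x in M. 0 \<le> Q x"
      and iQ: "integrable M Q" and one: "integral\<^sup>L M Q = 1" using Cprop[OF Q] by auto
    define g where "g x = real n * Q x + Q x * (\<bar>V x\<bar> * indicator {x. \<bar>V x\<bar> > real n} x)" for x
    have ig: "integrable M g" unfolding g_def using n[OF Q] iQ by auto
    have bnd: "AE x in M. \<bar>Q x * V x\<bar> \<le> g x"
      using pos
    proof eventually_elim
      case (elim x)
      show ?case
      proof (cases "\<bar>V x\<bar> > real n")
        case True then show ?thesis using elim by (simp add: g_def abs_mult)
      next
        case False
        then have "Q x * \<bar>V x\<bar> \<le> Q x * real n" using elim by (intro mult_left_mono) auto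
        then have "\<bar>Q x * V x\<bar> \<le> real n * Q x" using elim by (simp add: abs_mult mult.commute)
        then show ?thesis using False by (simp add: g_def)
      qed
    qed
    show iQV: "integrable M (\<lambda>x. Q x * V x)"
      by (rule Bochner_Integration.integrable_bound[OF ig]) (use bnd in auto)
    have "\<bar>\<integral>x. Q x * V x \<partial>M\<bar> \<le> (\<integral>x. \<bar>Q x * V x\<bar> \<partial>M)" by (rule integral_abs_bound)
    also have "\<dots> \<le> (\<integral>x. g x \<partial>M)" using iQV ig bnd by (intro integral_mono_AE) auto
    also have "\<dots> = real n * 1 + (\<integral>x. Q x * (\<bar>V x\<bar> * indicator {x. \<bar>V x\<bar> > real n} x) \<partial>M)"
      unfolding g_def using n[OF Q] iQ one by simp
    also have "\<dots> \<le> real n + 1" using n[OF Q] by simp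
    finally show "\<bar>\<integral>x. Q x * V x \<partial>M\<bar> \<le> real n + 1" .
  qed
qed

lemma half_enn:
  assumes "0 \<le> a" "0 \<le> b"
  shows "ennreal (1/2) * (ennreal a + ennreal b) = ennreal ((a+b)/2)"
proof -
  have "ennreal a + ennreal b = ennreal (a+b)" using assms by (metis ennreal_plus)
  moreover have "ennreal (1/2) * ennreal (a+b) = ennreal (1/2 * (a+b))"
    using assms by (metis ennreal_mult add_nonneg_nonneg divide_nonneg_nonneg zero_le_numeral zero_le_one)
  ultimately show ?thesis by simp
qed

lemma nn_mid:
  assumes [measurable]: "Q1 \<in> borel_measurable M" "Q2 \<in> borel_measurable M" "m \<in> borel_measurable M"
    and pos: "AE x in M. 0 \<le> Q1 x" "AE x in M. 0 \<le> Q2 x" and m0: "\<And>x. 0 \<le> m x"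
  shows "(\<integral>\<^sup>+x. ennreal ((Q1 x + Q2 x)/2 * m x) \<partial>M)
       = ennreal (1/2) * ((\<integral>\<^sup>+x. ennreal (Q1 x * m x) \<partial>M) + (\<integral>\<^sup>+x. ennreal (Q2 x * m x) \<partial>M))"
proof -
  have "(\<integral>\<^sup>+x. ennreal ((Q1 x + Q2 x)/2 * m x) \<partial>M)
      = (\<integral>\<^sup>+x. ennreal (1/2) * (ennreal (Q1 x * m x) + ennreal (Q2 x * m x)) \<partial>M)"
  proof (rule nn_integral_cong_AE)
    show "AE x in M. ennreal ((Q1 x + Q2 x)/2 * m x) = ennreal (1/2) * (ennreal (Q1 x * m x) + ennreal (Q2 x * m x))"
      using pos
    proof eventually_elim
      case (elim x)
      have e: "(Q1 x + Q2 x)/2 * m x = (Q1 x * m x + Q2 x * m x)/2" by (simp add: algebra_simps)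
      show ?case unfolding e by (rule half_enn[symmetric]) (use elim m0 in auto)
    qed
  qed
  also have "\<dots> = ennreal (1/2) * (\<integral>\<^sup>+x. (ennreal (Q1 x * m x) + ennreal (Q2 x * m x)) \<partial>M)"
    by (rule nn_integral_cmult) measurable
  also have "(\<integral>\<^sup>+x. (ennreal (Q1 x * m x) + ennreal (Q2 x * m x)) \<partial>M)
      = (\<integral>\<^sup>+x. ennreal (Q1 x * m x) \<partial>M) + (\<integral>\<^sup>+x. ennreal (Q2 x * m x) \<partial>M)"
    by (rule nn_integral_add) measurable
  finally show ?thesis .
qed

lemma EQ_mid:
  assumes [measurable]: "Q1 \<in> borel_measurable M" "Q2 \<in> borel_measurable M" "X \<in> borel_measurable M"
    and pos: "AE x in M. 0 \<le> Q1 x" "AE x in M. 0 \<le> Q2 x"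
    and u1: "u \<le> EQ M Q1 X" and u2: "u \<le> EQ M Q2 X"
  shows "u \<le> EQ M (\<lambda>x. (Q1 x + Q2 x)/2) X"
proof -
  define P1 where "P1 = (\<integral>\<^sup>+x. ennreal (Q1 x * max (X x) 0) \<partial>M)"
  define P2 where "P2 = (\<integral>\<^sup>+x. ennreal (Q2 x * max (X x) 0) \<partial>M)"
  define N1 where "N1 = (\<integral>\<^sup>+x. ennreal (Q1 x * max (- X x) 0) \<partial>M)"
  define N2 where "N2 = (\<integral>\<^sup>+x. ennreal (Q2 x * max (- X x) 0) \<partial>M)"
  have P: "(\<integral>\<^sup>+x. ennreal ((Q1 x + Q2 x)/2 * max (X x) 0) \<partial>M) = ennreal (1/2) * (P1 + P2)"
    unfolding P1_def P2_def by (rule nn_mid) (use pos in auto)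
  have N: "(\<integral>\<^sup>+x. ennreal ((Q1 x + Q2 x)/2 * max (- X x) 0) \<partial>M) = ennreal (1/2) * (N1 + N2)"
    unfolding N1_def N2_def by (rule nn_mid) (use pos in auto)
  have E1: "EQ M Q1 X = (if N1 = \<infinity> then - \<infinity> else enn2ereal P1 - enn2ereal N1)"
    unfolding EQ_def Let_def P1_def N1_def ..
  have E2: "EQ M Q2 X = (if N2 = \<infinity> then - \<infinity> else enn2ereal P2 - enn2ereal N2)"
    unfolding EQ_def Let_def P2_def N2_def ..
  have E: "EQ M (\<lambda>x. (Q1 x + Q2 x)/2) X = (if ennreal (1/2) * (N1 + N2) = \<infinity> then - \<infinity>
      else enn2ereal (ennreal (1/2) * (P1 + P2)) - enn2ereal (ennreal (1/2) * (N1 + N2)))"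
    unfolding EQ_def Let_def P N ..
  show ?thesis
  proof (cases "u = - \<infinity>")
    case True then show ?thesis by simp
  next
    case False
    have "N1 \<noteq> \<infinity>" using u1 False E1 by (auto split: if_splits)
    then obtain n1 where n1: "N1 = ennreal n1" "0 \<le> n1" by (cases N1) auto
    have "N2 \<noteq> \<infinity>" using u2 False E2 by (auto split: if_splits)
    then obtain n2 where n2: "N2 = ennreal n2" "0 \<le> n2" by (cases N2) auto
    have Nm: "ennreal (1/2) * (N1 + N2) = ennreal ((n1 + n2)/2)"
      using n1 n2 half_enn by simp
    show ?thesis
    proof (cases "P1 = \<infinity> \<or> P2 = \<infinity>")
      case True
      then have "ennreal (1/2) * (P1 + P2) = \<infinity>" by (auto simp: ennreal_mult_eq_top_iff)
      then have "EQ M (\<lambda>x. (Q1 x + Q2 x)/2) X = \<infinity>" using E Nm n1 n2 by simp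
      then show ?thesis by simp
    next
      case False
      then obtain p1 p2 where p: "P1 = ennreal p1" "0 \<le> p1" "P2 = ennreal p2" "0 \<le> p2"
        by (cases P1; cases P2) auto
      have Pm: "ennreal (1/2) * (P1 + P2) = ennreal ((p1 + p2)/2)"
        using p half_enn by simp
      have e1: "u \<le> ereal (p1 - n1)" using u1 E1 n1 p by simp
      have e2: "u \<le> ereal (p2 - n2)" using u2 E2 n2 p by simp
      have em: "EQ M (\<lambda>x. (Q1 x + Q2 x)/2) X = ereal ((p1 + p2)/2 - (n1 + n2)/2)"
        using E Nm Pm n1 n2 p by simp
      have "(p1 + p2)/2 - (n1 + n2)/2 = ((p1 - n1) + (p2 - n2))/2" by (simp add: field_simps)
      have "\<exists>r. u = ereal r" using e1 \<open>u \<noteq> - \<infinity>\<close> by (cases u) auto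
      then obtain r where ur: "u = ereal r" by blast
      then have "r \<le> p1 - n1" "r \<le> p2 - n2" using e1 e2 by auto
      then have "r \<le> (p1 + p2) / 2 - (n1 + n2) / 2" by (simp add: field_simps)
      then show ?thesis using ur em by simp
    qed
  qed
qed

lemma le_zero_from_seq:
  fixes x R :: real
  assumes "\<And>n::nat. x \<le> R / (real n + 1)" "0 \<le> R"
  shows "x \<le> 0"
proof (rule ccontr)
  assume "\<not> x \<le> 0"
  then have x0: "x > 0" by simp
  obtain n :: nat where n: "R / x < real n" using reals_Archimedean2 by blast
  then have "R < x * real n" using x0 by (simp add: field_simps)
  also have "\<dots> < x * (real n + 1)" using x0 by simp
  finally have "R / (real n + 1) < x" by (simp add: field_simps)
  with assms(1)[of n] show False by simp
qed

lemma pw_cont: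
  fixes q1 q2 v :: real and n :: nat
  assumes "0 \<le> q1" "0 \<le> q2"
  shows "\<bar>q1 * v - q2 * v\<bar> \<le> real n * \<bar>q1 - q2\<bar> + q1 * (\<bar>v\<bar> * indicator {x. \<bar>x\<bar> > real n} v)
           + q2 * (\<bar>v\<bar> * indicator {x. \<bar>x\<bar> > real n} v)"
proof (cases "\<bar>v\<bar> > real n")
  case True
  have "\<bar>q1 * v - q2 * v\<bar> = \<bar>q1 - q2\<bar> * \<bar>v\<bar>" by (simp add: abs_mult left_diff_distrib[symmetric])
  also have "\<dots> \<le> (q1 + q2) * \<bar>v\<bar>" using assms by (intro mult_right_mono) auto
  finally have "\<bar>q1 * v - q2 * v\<bar> \<le> q1 * \<bar>v\<bar> + q2 * \<bar>v\<bar>" by (simp add: algebra_simps)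
  moreover have "0 \<le> real n * \<bar>q1 - q2\<bar>" by simp
  ultimately have "\<bar>q1 * v - q2 * v\<bar> \<le> real n * \<bar>q1 - q2\<bar> + (q1 * \<bar>v\<bar> + q2 * \<bar>v\<bar>)" by linarith
  then show ?thesis using True by (simp add: indicator_def algebra_simps)
next
  case False
  have "\<bar>q1 * v - q2 * v\<bar> = \<bar>q1 - q2\<bar> * \<bar>v\<bar>" by (simp add: abs_mult left_diff_distrib[symmetric])
  also have "\<dots> \<le> \<bar>q1 - q2\<bar> * real n" using False by (intro mult_left_mono) auto
  finally show ?thesis using False by (simp add: algebra_simps)
qed

context sigma_finite_subalgebra
begin

lemma ce_abs:
  assumes f: "integrable M f"
  shows "AE x in M. \<bar>real_cond_exp M F f x\<bar> \<le> real_cond_exp M F (\<lambda>x. \<bar>f x\<bar>) x"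
proof -
  have [measurable]: "f \<in> borel_measurable M" using f by auto
  have "AE x in M. real_cond_exp M F f x \<le> real_cond_exp M F (\<lambda>x. \<bar>f x\<bar>) x"
    using f by (intro real_cond_exp_mono) auto
  moreover have "AE x in M. real_cond_exp M F (\<lambda>x. - f x) x \<le> real_cond_exp M F (\<lambda>x. \<bar>f x\<bar>) x"
    using f by (intro real_cond_exp_mono) auto
  moreover have "AE x in M. real_cond_exp M F (\<lambda>x. (-1) * f x) x = (-1) * real_cond_exp M F f x"
    using f by (rule real_cond_exp_cmult)
  ultimately show ?thesis by eventually_elim auto
qed

lemma ce_contract:
  assumes a: "integrable M a" and b: "integrable M b"
  shows "(\<integral>x. \<bar>real_cond_exp M F a x - real_cond_exp M F b x\<bar> \<partial>M) \<le> (\<integral>x. \<bar>a x - b x\<bar> \<partial>M)"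
proof -
  have ab: "integrable M (\<lambda>x. a x - b x)" using a b by auto
  have "AE x in M. real_cond_exp M F (\<lambda>x. a x - b x) x = real_cond_exp M F a x - real_cond_exp M F b x"
    using a b by (rule real_cond_exp_diff)
  moreover have "AE x in M. \<bar>real_cond_exp M F (\<lambda>x. a x - b x) x\<bar> \<le> real_cond_exp M F (\<lambda>x. \<bar>a x - b x\<bar>) x"
    using ce_abs[OF ab] by simp
  ultimately have ae: "AE x in M. \<bar>real_cond_exp M F a x - real_cond_exp M F b x\<bar> \<le> real_cond_exp M F (\<lambda>x. \<bar>a x - b x\<bar>) x"
    by eventually_elim auto
  have "(\<integral>x. \<bar>real_cond_exp M F a x - real_cond_exp M F b x\<bar> \<partial>M) \<le> (\<integral>x. real_cond_exp M F (\<lambda>x. \<bar>a x - b x\<bar>) x \<partial>M)"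
    using ae real_cond_exp_int(1)[OF a] real_cond_exp_int(1)[OF b] real_cond_exp_int(1)[of "\<lambda>x. \<bar>a x - b x\<bar>"] ab
    by (intro integral_mono_AE) auto
  also have "\<dots> = (\<integral>x. \<bar>a x - b x\<bar> \<partial>M)"
    using ab by (intro real_cond_exp_int(2)) auto
  finally show ?thesis .
qed

lemma ce_mid:
  assumes a: "integrable M a" and b: "integrable M b" and [measurable]: "V \<in> borel_measurable M"
    and ia: "integrable M (\<lambda>x. real_cond_exp M F a x * V x)" and ib: "integrable M (\<lambda>x. real_cond_exp M F b x * V x)"
  shows "(\<integral>x. real_cond_exp M F (\<lambda>x. (a x + b x)/2) x * V x \<partial>M)
       = ((\<integral>x. real_cond_exp M F a x * V x \<partial>M) + (\<integral>x. real_cond_exp M F b x * V x \<partial>M)) / 2"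
proof -
  have ab: "integrable M (\<lambda>x. a x + b x)" using a b by auto
  have "AE x in M. real_cond_exp M F (\<lambda>x. (a x + b x)/2) x = real_cond_exp M F (\<lambda>x. a x + b x) x / 2"
    using ab by (rule real_cond_exp_cdiv)
  moreover have "AE x in M. real_cond_exp M F (\<lambda>x. a x + b x) x = real_cond_exp M F a x + real_cond_exp M F b x"
    using a b by (rule real_cond_exp_add)
  ultimately have "AE x in M. real_cond_exp M F (\<lambda>x. (a x + b x)/2) x * V x
      = (real_cond_exp M F a x * V x + real_cond_exp M F b x * V x) / 2"
    by eventually_elim (simp add: algebra_simps)
  then have "(\<integral>x. real_cond_exp M F (\<lambda>x. (a x + b x)/2) x * V x \<partial>M)
      = (\<integral>x. (real_cond_exp M F a x * V x + real_cond_exp M F b x * V x) / 2 \<partial>M)"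
    by (intro integral_cong_AE) auto
  also have "\<dots> = ((\<integral>x. real_cond_exp M F a x * V x \<partial>M) + (\<integral>x. real_cond_exp M F b x * V x \<partial>M)) / 2"
    using ia ib by (simp add: Bochner_Integration.integral_add)
  finally show ?thesis .
qed

lemma ce_cont:
  assumes V: "V \<in> L1s M C"
    and Cprop: "\<And>Q. Q \<in> C \<Longrightarrow> Q \<in> borel_measurable M \<and> (AE x in M. 0 \<le> Q x)"
    and ZsC: "\<And>k. real_cond_exp M F (Zs k) \<in> C" and ZC: "real_cond_exp M F Z \<in> C"
    and iZs: "\<And>k. integrable M (Zs k)" and iZ: "integrable M Z"
    and iVk: "\<And>k. integrable M (\<lambda>x. real_cond_exp M F (Zs k) x * V x)"
    and iV: "integrable M (\<lambda>x. real_cond_exp M F Z x * V x)"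
    and conv: "(\<lambda>k. \<integral>x. \<bar>Zs k x - Z x\<bar> \<partial>M) \<longlonglongrightarrow> 0"
  shows "(\<lambda>k. \<integral>x. real_cond_exp M F (Zs k) x * V x \<partial>M) \<longlonglongrightarrow> (\<integral>x. real_cond_exp M F Z x * V x \<partial>M)"
proof (rule LIMSEQ_I)
  fix e :: real assume e: "0 < e"
  have [measurable]: "V \<in> borel_measurable M" using V unfolding L1s_def by auto
  obtain n :: nat where n: "\<And>Q. Q \<in> C \<Longrightarrow> integrable M (\<lambda>x. Q x * (\<bar>V x\<bar> * indicator {x. \<bar>V x\<bar> > real n} x))
           \<and> (\<integral>x. Q x * (\<bar>V x\<bar> * indicator {x. \<bar>V x\<bar> > real n} x) \<partial>M) \<le> e/4"
    using L1s_tail[OF V, of "e/4"] Cprop e by force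
  have "e / (4 * (real n + 1)) > 0" using e by simp
  from order_tendstoD(2)[OF conv this] obtain N where N: "\<And>k. N \<le> k \<Longrightarrow> (\<integral>x. \<bar>Zs k x - Z x\<bar> \<partial>M) < e / (4 * (real n + 1))"
    by (auto simp: eventually_sequentially)
  show "\<exists>no. \<forall>k\<ge>no. norm ((\<integral>x. real_cond_exp M F (Zs k) x * V x \<partial>M) - (\<integral>x. real_cond_exp M F Z x * V x \<partial>M)) < e"
  proof (intro exI[of _ N] allI impI)
    fix k assume k: "N \<le> k"
    define qk where "qk = real_cond_exp M F (Zs k)"
    define q where "q = real_cond_exp M F Z"
    define t where "t x = \<bar>V x\<bar> * indicator {x. \<bar>V x\<bar> > real n} x" for x
    have [measurable]: "qk \<in> borel_measurable M" "q \<in> borel_measurable M" unfolding qk_def q_def by auto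
    have pos: "AE x in M. 0 \<le> qk x" "AE x in M. 0 \<le> q x" using Cprop[OF ZsC[of k]] Cprop[OF ZC] unfolding qk_def q_def by auto
    have it: "integrable M (\<lambda>x. qk x * t x)" "integrable M (\<lambda>x. q x * t x)"
      "(\<integral>x. qk x * t x \<partial>M) \<le> e/4" "(\<integral>x. q x * t x \<partial>M) \<le> e/4"
      using n[OF ZsC[of k]] n[OF ZC] unfolding qk_def q_def t_def by auto
    have iqd: "integrable M (\<lambda>x. \<bar>qk x - q x\<bar>)"
      unfolding qk_def q_def using real_cond_exp_int(1)[OF iZs[of k]] real_cond_exp_int(1)[OF iZ] by auto
    have "norm ((\<integral>x. qk x * V x \<partial>M) - (\<integral>x. q x * V x \<partial>M)) = \<bar>\<integral>x. qk x * V x - q x * V x \<partial>M\<bar>"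
      using iVk[of k] iV unfolding qk_def q_def by (simp add: Bochner_Integration.integral_diff)
    also have "\<dots> \<le> (\<integral>x. \<bar>qk x * V x - q x * V x\<bar> \<partial>M)" by (rule integral_abs_bound)
    also have "\<dots> \<le> (\<integral>x. real n * \<bar>qk x - q x\<bar> + qk x * t x + q x * t x \<partial>M)"
    proof (rule integral_mono_AE)
      show "integrable M (\<lambda>x. \<bar>qk x * V x - q x * V x\<bar>)" using iVk[of k] iV unfolding qk_def q_def by auto
      show "integrable M (\<lambda>x. real n * \<bar>qk x - q x\<bar> + qk x * t x + q x * t x)" using iqd it by auto
      show "AE x in M. \<bar>qk x * V x - q x * V x\<bar> \<le> real n * \<bar>qk x - q x\<bar> + qk x * t x + q x * t x"
        using pos(1) pos(2)
      proof eventually_elim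
        case (elim x)
        have "indicator {x. real n < \<bar>V x\<bar>} x = (indicator {y. real n < \<bar>y\<bar>} (V x) :: real)"
          by (simp add: indicator_def)
        then show ?case using pw_cont[OF elim, of "V x" n] by (simp add: t_def)
      qed
    qed
    also have "\<dots> = real n * (\<integral>x. \<bar>qk x - q x\<bar> \<partial>M) + (\<integral>x. qk x * t x \<partial>M) + (\<integral>x. q x * t x \<partial>M)"
      using iqd it by (simp add: Bochner_Integration.integral_add)
    also have "\<dots> < e"
    proof -
      have "(\<integral>x. \<bar>qk x - q x\<bar> \<partial>M) \<le> (\<integral>x. \<bar>Zs k x - Z x\<bar> \<partial>M)"
        unfolding qk_def q_def by (rule ce_contract[OF iZs iZ])
      also have "\<dots> < e / (4 * (real n + 1))" using N[OF k] .
      finally have a: "(\<integral>x. \<bar>qk x - q x\<bar> \<partial>M) < e / (4 * (real n + 1))" .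
      have a0: "0 \<le> (\<integral>x. \<bar>qk x - q x\<bar> \<partial>M)" by simp
      have "real n * (\<integral>x. \<bar>qk x - q x\<bar> \<partial>M) \<le> (real n + 1) * (\<integral>x. \<bar>qk x - q x\<bar> \<partial>M)"
        using a0 by (intro mult_right_mono) auto
      also have "\<dots> \<le> (real n + 1) * (e / (4 * (real n + 1)))"
        using a by (intro mult_left_mono) auto
      also have "\<dots> = e/4" by (simp add: field_simps)
      finally show ?thesis using it(3,4) e by linarith
    qed
    finally show "norm ((\<integral>x. real_cond_exp M F (Zs k) x * V x \<partial>M) - (\<integral>x. real_cond_exp M F Z x * V x \<partial>M)) < e"
      unfolding qk_def q_def .
  qed
qed

end

theorem corollary6p4:
  fixes M :: "'a measure" and u :: "('a \<Rightarrow> real) \<Rightarrow> ereal"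
    and Y :: "'a \<Rightarrow> 'b::euclidean_space" and X W :: "'a \<Rightarrow> real"
  defines "D \<equiv> determining_set M u"
  assumes "prob_space M"
    and "coherent_utility M u"
    and "L1_closed M D"
    and "unif_integrable M D"
    and "Y \<in> borel_measurable M"
    and "X \<in> L1s M D \<inter> L1s M (cond_set M D Y)" and "integrable M X"
    and "W \<in> L1s M D \<inter> L1s M (cond_set M D Y)" and "integrable M W"
  shows "((\<lambda>\<epsilon>::real. (uf M D (\<lambda>x. W x + \<epsilon> * X x) Y - uf M D W Y) / ereal \<epsilon>)
           \<longlongrightarrow> ufc M D X Y W) (at_right 0)"
proof -
  note P = assms(2)
  interpret prob_space M by (rule P)
  define F where "F = vimage_algebra (space M) Y borel"
  have subalg: "subalgebra M F"
    unfolding subalgebra_def F_def using measurable_iff_sets[of Y M borel] assms(6) by auto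
  interpret sfs: finite_measure_subalgebra M F
    by unfold_locales (rule subalg)
  define q where "q Z = real_cond_exp M F Z" for Z
  have cs: "cond_set M D Y = q ` D" unfolding cond_set_def q_def F_def ..
  have Dd: "D \<subseteq> dens M" unfolding D_def determining_set_def by auto
  have Dle: "u V \<le> EQ M Q V" if "Q \<in> D" "V \<in> borel_measurable M" for Q V
    using that unfolding D_def determining_set_def by auto
  obtain D0 where D0: "D0 \<noteq> {}" "D0 \<subseteq> dens M" "\<And>V. V \<in> borel_measurable M \<Longrightarrow> u V = (INF Q\<in>D0. EQ M Q V)"
    using assms(3) unfolding coherent_utility_def by blast
  have "D0 \<subseteq> D"
  proof
    fix Q assume Q: "Q \<in> D0"
    have "u V \<le> EQ M Q V" if "V \<in> borel_measurable M" for V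
      using D0(3)[OF that] Q by (auto intro: INF_lower)
    then show "Q \<in> D" using Q D0(2) unfolding D_def determining_set_def by auto
  qed
  then have Dne: "D \<noteq> {}" using D0(1) by blast
  have Dmid: "(\<lambda>x. (a x + b x)/2) \<in> D" if "a \<in> D" "b \<in> D" for a b
  proof -
    have ad: "a \<in> dens M" and bd: "b \<in> dens M" using that Dd by auto
    note af = dens_facts[OF ad] and bf = dens_facts[OF bd]
    have "(\<lambda>x. (a x + b x)/2) \<in> dens M"
      unfolding dens_def using af bf by (auto simp: Bochner_Integration.integral_add)
    moreover have "u V \<le> EQ M (\<lambda>x. (a x + b x)/2) V" if "V \<in> borel_measurable M" for V
      using EQ_mid[OF af(1) bf(1) that af(2) bf(2) Dle[OF \<open>a \<in> D\<close> that] Dle[OF \<open>b \<in> D\<close> that]] .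
    ultimately show ?thesis unfolding D_def determining_set_def by auto
  qed
  have qm[measurable]: "q Z \<in> borel_measurable M" for Z unfolding q_def by measurable
  have qpos: "AE x in M. 0 \<le> q Z x" if "Z \<in> D" for Z
    unfolding q_def using dens_facts[of Z M] that Dd by (intro sfs.real_cond_exp_pos) auto
  have qint: "integrable M (q Z)" "integral\<^sup>L M (q Z) = 1" if "Z \<in> D" for Z
    unfolding q_def using dens_facts[of Z M] that Dd sfs.real_cond_exp_int[of Z] by auto
  have Cprop: "Q \<in> borel_measurable M \<and> (AE x in M. 0 \<le> Q x) \<and> integrable M Q \<and> integral\<^sup>L M Q = 1"
    if "Q \<in> cond_set M D Y" for Q
    using that qpos qint unfolding cs by auto
  have XC: "X \<in> L1s M (cond_set M D Y)" and WC: "W \<in> L1s M (cond_set M D Y)" using assms(7,9) by auto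
  have [measurable]: "X \<in> borel_measurable M" "W \<in> borel_measurable M" using assms(8,10) by auto
  obtain BX where BX: "\<And>Q. Q \<in> cond_set M D Y \<Longrightarrow> integrable M (\<lambda>x. Q x * X x) \<and> \<bar>\<integral>x. Q x * X x \<partial>M\<bar> \<le> BX"
    using L1s_bound[OF XC Cprop] by blast
  obtain BW where BW: "\<And>Q. Q \<in> cond_set M D Y \<Longrightarrow> integrable M (\<lambda>x. Q x * W x) \<and> \<bar>\<integral>x. Q x * W x \<partial>M\<bar> \<le> BW"
    using L1s_bound[OF WC Cprop] by blast
  define g where "g Z = (\<integral>x. q Z x * W x \<partial>M)" for Z
  define h where "h Z = (\<integral>x. q Z x * X x \<partial>M)" for Z
  have iW: "integrable M (\<lambda>x. q Z x * W x)" and gB: "\<bar>g Z\<bar> \<le> BW" if "Z \<in> D" for Z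
    using BW[of "q Z"] that unfolding cs g_def by auto
  have iX: "integrable M (\<lambda>x. q Z x * X x)" and hB: "\<bar>h Z\<bar> \<le> BX" if "Z \<in> D" for Z
    using BX[of "q Z"] that unfolding cs h_def by auto
  have EQW: "EQ M (q Z) W = ereal (g Z)" if "Z \<in> D" for Z
    unfolding g_def by (rule EQ_int) (use qpos[OF that] iW[OF that] in auto)
  have EQX: "EQ M (q Z) X = ereal (h Z)" if "Z \<in> D" for Z
    unfolding h_def by (rule EQ_int) (use qpos[OF that] iX[OF that] in auto)
  have EQe: "EQ M (q Z) (\<lambda>x. W x + e * X x) = ereal (g Z + e * h Z)" if "Z \<in> D" for Z e
  proof -
    have i: "integrable M (\<lambda>x. q Z x * W x + e * (q Z x * X x))" using iW[OF that] iX[OF that] by auto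
    have "EQ M (q Z) (\<lambda>x. W x + e * X x) = ereal (\<integral>x. q Z x * (W x + e * X x) \<partial>M)"
      by (rule EQ_int) (use qpos[OF that] i in \<open>auto simp: algebra_simps\<close>)
    also have "(\<integral>x. q Z x * (W x + e * X x) \<partial>M) = (\<integral>x. q Z x * W x + e * (q Z x * X x) \<partial>M)"
      by (simp add: algebra_simps)
    also have "\<dots> = g Z + e * h Z" unfolding g_def h_def using iW[OF that] iX[OF that] by simp
    finally show ?thesis .
  qed
  have ufV: "uf M D V Y = (INF Z\<in>D. EQ M (q Z) V)" for V
    unfolding uf_def cs by (simp add: image_comp)
  define mr where "mr = Inf (g ` D)"
  define Fe where "Fe e = Inf ((\<lambda>Z. g Z + e * h Z) ` D)" for e
  have bddg: "bdd_below (g ` D)" using gB by (intro bdd_belowI[where m="- BW"]) (force simp: abs_le_iff)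
  have bddF: "bdd_below ((\<lambda>Z. g Z + e * h Z) ` D)" for e
  proof (intro bdd_belowI[where m="- BW - \<bar>e\<bar> * BX"])
    fix y assume "y \<in> (\<lambda>Z. g Z + e * h Z) ` D"
    then obtain Z where Z: "Z \<in> D" "y = g Z + e * h Z" by auto
    have "\<bar>e * h Z\<bar> \<le> \<bar>e\<bar> * BX" using hB[OF Z(1)] by (simp add: abs_mult mult_left_mono)
    then show "- BW - \<bar>e\<bar> * BX \<le> y" using gB[OF Z(1)] Z(2) by (simp add: abs_le_iff)
  qed
  have ufW: "uf M D W Y = ereal mr"
  proof -
    have "(INF Z\<in>D. EQ M (q Z) W) = (INF Z\<in>D. ereal (g Z))" by (rule INF_cong) (auto simp: EQW)
    also have "\<dots> = ereal (Inf (g ` D))" using ereal_Inf'[OF bddg] Dne by (simp add: image_image)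
    finally show ?thesis unfolding ufV mr_def .
  qed
  have ufe: "uf M D (\<lambda>x. W x + e * X x) Y = ereal (Fe e)" for e
  proof -
    have "(INF Z\<in>D. EQ M (q Z) (\<lambda>x. W x + e * X x)) = (INF Z\<in>D. ereal (g Z + e * h Z))" by (rule INF_cong) (auto simp: EQe)
    also have "\<dots> = ereal (Inf ((\<lambda>Z. g Z + e * h Z) ` D))" using ereal_Inf'[OF bddF] Dne by (simp add: image_image)
    finally show ?thesis unfolding ufV Fe_def .
  qed
  have mr_le: "mr \<le> g Z" if "Z \<in> D" for Z unfolding mr_def using bddg that by (intro cInf_lower) auto
  have Fe_le: "Fe e \<le> g Z + e * h Z" if "Z \<in> D" for Z e unfolding Fe_def using bddF that by (intro cInf_lower) auto
  have Fe_approx: "\<exists>Z\<in>D. g Z + e * h Z < Fe e + d" if "d > 0" for e d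
  proof -
    have "Inf ((\<lambda>Z. g Z + e * h Z) ` D) < Fe e + d" unfolding Fe_def using that by simp
    from cInf_lessD[OF _ this] Dne show ?thesis by auto
  qed
  have ext_in: "q Z \<in> extreme_set M D Y W" if "Z \<in> D" "g Z = mr" for Z
    unfolding extreme_set_def cs using that EQW ufW by auto
  have ext_inv: "\<exists>Z\<in>D. Q = q Z \<and> g Z = mr" if "Q \<in> extreme_set M D Y W" for Q
    using that EQW ufW unfolding extreme_set_def cs by auto
  have ufc_le: "ufc M D X Y W \<le> ereal (h Z)" if "Z \<in> D" "g Z = mr" for Z
    unfolding ufc_def using ext_in[OF that] EQX[OF that(1)] by (metis INF_lower)
  have quot_le: "ereal ((Fe e - mr) / e) \<le> ufc M D X Y W" if "e > 0" for e
    unfolding ufc_def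
  proof (rule INF_greatest)
    fix Q assume "Q \<in> extreme_set M D Y W"
    then obtain Z where Z: "Z \<in> D" "Q = q Z" "g Z = mr" using ext_inv by blast
    have "Fe e - mr \<le> e * h Z" using Fe_le[OF Z(1), of e] Z(3) by simp
    then have "(Fe e - mr) / e \<le> h Z" using that by (simp add: pos_divide_le_eq mult.commute)
    then show "ereal ((Fe e - mr) / e) \<le> EQ M Q X" using EQX[OF Z(1)] Z(2) by simp
  qed
  have quot_eq: "\<forall>\<^sub>F e in at_right 0. (uf M D (\<lambda>x. W x + e * X x) Y - uf M D W Y) / ereal e = ereal ((Fe e - mr) / e)"
    using eventually_at_right_less[of "0::real"] by eventually_elim (simp add: ufe ufW)
  have BX0: "0 \<le> BX" using hB Dne by (meson all_not_in_conv abs_ge_zero order_trans)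
  have Cprop': "Q \<in> borel_measurable M \<and> (AE x in M. 0 \<le> Q x)" if "Q \<in> cond_set M D Y" for Q
    using Cprop[OF that] by auto
  have gcont: "(\<lambda>k. g (Zs k)) \<longlonglongrightarrow> g Z" and hcont: "(\<lambda>k. h (Zs k)) \<longlonglongrightarrow> h Z"
    if Zs: "\<And>k. Zs k \<in> D" and Z: "Z \<in> D" and conv: "(\<lambda>k. \<integral>x. \<bar>Zs k x - Z x\<bar> \<partial>M) \<longlonglongrightarrow> 0" for Zs Z
  proof -
    have iZs: "integrable M (Zs k)" for k using dens_facts(3)[of "Zs k" M] Zs Dd by auto
    have iZ: "integrable M Z" using dens_facts(3)[of Z M] Z Dd by auto
    have ZsC: "real_cond_exp M F (Zs k) \<in> cond_set M D Y" for k using Zs unfolding cs q_def by auto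
    have ZC: "real_cond_exp M F Z \<in> cond_set M D Y" using Z unfolding cs q_def by auto
    show "(\<lambda>k. g (Zs k)) \<longlonglongrightarrow> g Z" unfolding g_def q_def
      by (rule sfs.ce_cont[OF WC Cprop' ZsC ZC iZs iZ _ _ conv]) (use iW Zs Z in \<open>auto simp: q_def\<close>)
    show "(\<lambda>k. h (Zs k)) \<longlonglongrightarrow> h Z" unfolding h_def q_def
      by (rule sfs.ce_cont[OF XC Cprop' ZsC ZC iZs iZ _ _ conv]) (use iX Zs Z in \<open>auto simp: q_def\<close>)
  qed
  have gmid: "g (\<lambda>x. (a1 x + b1 x)/2) = (g a1 + g b1)/2" and hmid: "h (\<lambda>x. (a1 x + b1 x)/2) = (h a1 + h b1)/2"
    if "a1 \<in> D" "b1 \<in> D" for a1 b1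
  proof -
    have ia: "integrable M a1" "integrable M b1" using dens_facts(3) that Dd by blast+
    show "g (\<lambda>x. (a1 x + b1 x)/2) = (g a1 + g b1)/2" unfolding g_def q_def
      by (rule sfs.ce_mid[OF ia]) (use iW that in \<open>auto simp: q_def\<close>)
    show "h (\<lambda>x. (a1 x + b1 x)/2) = (h a1 + h b1)/2" unfolding h_def q_def
      by (rule sfs.ce_mid[OF ia]) (use iX that in \<open>auto simp: q_def\<close>)
  qed
  have main: "((\<lambda>e. ereal ((Fe e - mr)/e)) \<longlongrightarrow> ufc M D X Y W) (at_right 0)"
  proof (rule order_tendstoI)
    fix a assume ua: "ufc M D X Y W < a"
    have "\<forall>\<^sub>F e in at_right 0. 0 < (e::real)" by (rule eventually_at_right_less)
    then show "\<forall>\<^sub>F e in at_right 0. ereal ((Fe e - mr)/e) < a"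
      by (rule eventually_mono) (use quot_le ua in \<open>auto intro: le_less_trans\<close>)
  next
    fix a assume a: "a < ufc M D X Y W"
    show "\<forall>\<^sub>F e in at_right 0. a < ereal ((Fe e - mr)/e)"
    proof (cases a)
      case MInf then show ?thesis by simp
    next
      case PInf then show ?thesis using a by simp
    next
      case (real c)
      show ?thesis
      proof (rule ccontr)
        assume ne: "\<not> ?thesis"
        have ex: "\<exists>e>0. e < 1/(real n + 1) \<and> (Fe e - mr)/e \<le> c" for n
        proof (rule ccontr)
          assume "\<not> ?thesis"
          then have "\<forall>e>0. e < 1/(real n+1) \<longrightarrow> a < ereal ((Fe e - mr)/e)" using real by auto
          then have "\<forall>\<^sub>F e in at_right 0. a < ereal ((Fe e - mr)/e)"
            unfolding eventually_at_right_field by (intro exI[of _ "1/(real n+1)"]) auto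
          with ne show False by blast
        qed
        define R where "R = \<bar>c\<bar> + 1 + BX"
        have R0: "0 \<le> R" unfolding R_def using BX0 by simp
        define K where "K n = {Z \<in> D. g Z \<le> mr + R/(real n+1) \<and> h Z \<le> c + 1/(real n+1)}" for n
        have Kne: "K n \<noteq> {}" for n
        proof -
          obtain e where e: "e > 0" "e < 1/(real n+1)" "(Fe e - mr)/e \<le> c" using ex by blast
          have Fc: "Fe e - mr \<le> c * e" using e by (simp add: pos_divide_le_eq)
          have "e/(real n+1) > 0" using e by simp
          from Fe_approx[OF this, of e] obtain Z where Z: "Z \<in> D" "g Z + e * h Z < Fe e + e/(real n+1)" by auto
          have gm: "mr \<le> g Z" using mr_le Z by simp
          have d1: "e * (c + 1/(real n + 1)) = c * e + e/(real n+1)" by (simp add: algebra_simps)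
          have "e * h Z < e * (c + 1/(real n+1))" using Z(2) Fc gm d1 by linarith
          then have hZ: "h Z < c + 1/(real n+1)" using e(1) by (simp add: mult_less_cancel_left_pos)
          have d2: "e * (c + 1/(real n+1) - h Z) = c * e + e/(real n+1) - e * h Z" by (simp add: algebra_simps)
          have "g Z - mr < e * (c + 1/(real n+1) - h Z)" using Z(2) Fc d2 by linarith
          also have "e * (c + 1/(real n+1) - h Z) \<le> (1/(real n+1)) * (c + 1/(real n+1) - h Z)"
            using e hZ by (intro mult_right_mono) auto
          also have "\<dots> \<le> (1/(real n+1)) * R"
          proof (intro mult_left_mono)
            have "1/(real n+1) \<le> 1" by (simp add: field_simps)
            moreover have "- h Z \<le> BX" using hB[OF Z(1)] by (simp add: abs_le_iff)
            ultimately show "c + 1/(real n+1) - h Z \<le> R" unfolding R_def by linarith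
          qed simp
          finally have "g Z \<le> mr + R/(real n+1)" by simp
          then have "Z \<in> K n" unfolding K_def using Z(1) hZ by auto
          then show ?thesis by blast
        qed
        have KD: "K j \<subseteq> D" for j unfolding K_def by auto
        have Kdec: "K (Suc j) \<subseteq> K j" for j
        proof -
          have "R/(real (Suc j)+1) \<le> R/(real j+1)" using R0 by (intro divide_left_mono) auto
          moreover have "1/(real (Suc j)+1) \<le> 1/(real j+1)" by (intro divide_left_mono) auto
          ultimately show ?thesis unfolding K_def by auto
        qed
        have Kmid: "(\<lambda>x. (a1 x + b1 x)/2) \<in> K j" if "a1 \<in> K j" "b1 \<in> K j" for j a1 b1
        proof -
          have ab: "a1 \<in> D" "b1 \<in> D" using that unfolding K_def by auto
          show ?thesis using that Dmid[OF ab] gmid[OF ab] hmid[OF ab] unfolding K_def by auto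
        qed
        have Kcl: "Z \<in> K j" if Zs: "\<And>k. Zs k \<in> K j" and Z: "Z \<in> D"
          and conv: "(\<lambda>k. \<integral>x. \<bar>Zs k x - Z x\<bar> \<partial>M) \<longlonglongrightarrow> 0" for j Zs Z
        proof -
          have ZsD: "Zs k \<in> D" for k using Zs KD by blast
          have "g Z \<le> mr + R/(real j+1)"
            by (rule LIMSEQ_le_const2[OF gcont[OF ZsD Z conv]]) (use Zs in \<open>auto simp: K_def\<close>)
          moreover have "h Z \<le> c + 1/(real j+1)"
            by (rule LIMSEQ_le_const2[OF hcont[OF ZsD Z conv]]) (use Zs in \<open>auto simp: K_def\<close>)
          ultimately show ?thesis using Z unfolding K_def by auto
        qed
        have "\<exists>Z. \<forall>j. Z \<in> K j"
        proof (rule compact_nested[where M=M and D=D and K=K])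
          show "\<And>j a b. a \<in> K j \<Longrightarrow> b \<in> K j \<Longrightarrow> (\<lambda>x. (a x + b x) / 2) \<in> K j" by (rule Kmid)
          show "\<And>j Zs Z. (\<And>k. Zs k \<in> K j) \<Longrightarrow> Z \<in> D \<Longrightarrow> (\<lambda>k. \<integral>x. \<bar>Zs k x - Z x\<bar> \<partial>M) \<longlonglongrightarrow> 0 \<Longrightarrow> Z \<in> K j"
            by (rule Kcl)
        qed (use P Dd assms(4) assms(5) KD Kdec Kne in auto)
        then obtain Z0 where Z0: "\<And>j. Z0 \<in> K j" by blast
        have Z0D: "Z0 \<in> D" using Z0[of 0] KD by blast
        have "g Z0 - mr \<le> 0"
        proof (rule le_zero_from_seq[of _ R])
          fix n :: nat
          have "g Z0 \<le> mr + R / (real n + 1)" using Z0[of n] by (simp add: K_def)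
          then show "g Z0 - mr \<le> R / (real n + 1)" by linarith
        qed (rule R0)
        then have gZ0: "g Z0 = mr" using mr_le[OF Z0D] by simp
        have "h Z0 - c \<le> 0"
        proof (rule le_zero_from_seq[of _ 1])
          fix n :: nat
          have "h Z0 \<le> c + 1 / (real n + 1)" using Z0[of n] by (simp add: K_def)
          then show "h Z0 - c \<le> 1 / (real n + 1)" by linarith
        qed simp
        then have "ereal (h Z0) \<le> a" using real by simp
        with ufc_le[OF Z0D gZ0] a show False by simp
      qed
    qed
  qed
  then show ?thesis using tendsto_cong[OF quot_eq] by simp
qed

end
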